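(* Consider the general $\alpha$-cap process described in the context. Let $H$ be an oriented hyperplane. Suppose that for some $t\ge1$, $\psi_t(x)\le\psi_t(x^H)$ for all $x\in H^-$. Then for all $s\ge t$ and all $x\in H^-$, $\psi_s(x)\le\psi_s(x^H)$.
   Context: An oriented hyperplane is $H=\{x\in\mathbb{R}^d:\langle x,u\rangle=a\}$ with $u$ a unit vector and $a\in\mathbb{R}$ (the pair $(u,a)$ is part of the data); $H^-=\{x:\langle x,u\rangle<a\}$, $H^+=\{x:\langle x,u\rangle>a\}$, and $x^H=x-2(\langle x,u\rangle-a)u$ is the reflection of $x$ across $H$. Kernel assumptions: $g:\mathbb{R}^d\to[0,1]$ satisfies $g(x)=\tilde g(\|x\|)$; $g(0)=1$, $g>0$; $g$ is $L$-Lipschitz with continuous first and second derivatives; $\tilde g'(r)<0$ for $r>0$. General $\alpha$-cap process: $\psi_0:\mathbb{R}^d\to[0,1]$ measurable and integrable; $\gamma_t:[0,\infty)\to[0,1]$ monotone increasing; for $t\ge0$, $f_t(x)=\int_{\mathbb{R}^d}\psi_t(y)g(x-y)\,dy$ and $\psi_{t+1}=\gamma_t\circ f_t$; there is $R>0$ with $\gamma_t(f_t(x))=0$ whenever $\|x\|>R$, for all $t$. *)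

theory Defs
  imports "HOL-Analysis.Analysis"
begin

text \<open>Reflection of x across the oriented hyperplane H = {x. x \<bullet> u = a}.\<close>
definition hreflect :: "'a::euclidean_space \<Rightarrow> real \<Rightarrow> 'a \<Rightarrow> 'a" where
  "hreflect u a x = x - (2 * (x \<bullet> u - a)) *\<^sub>R u"

definition hminus :: "'a::euclidean_space \<Rightarrow> real \<Rightarrow> 'a set" where
  "hminus u a = {x. x \<bullet> u < a}"

definition cap_kernel :: "('a::euclidean_space \<Rightarrow> real) \<Rightarrow> (real \<Rightarrow> real) \<Rightarrow> real \<Rightarrow> bool" where
  "cap_kernel g gt L \<longleftrightarrow>
     (\<forall>x. 0 \<le> g x \<and> g x \<le> 1) \<and>
     (\<forall>x. g x = gt (norm x)) \<and>
     g 0 = 1 \<and> (\<forall>x. g x > 0) \<and>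
     L-lipschitz_on UNIV g \<and>
     (\<exists>Dg D2g. (\<forall>x. (g has_derivative blinfun_apply (Dg x)) (at x)) \<and>
               (\<forall>x. (Dg has_derivative blinfun_apply (D2g x)) (at x)) \<and>
               continuous_on UNIV Dg \<and> continuous_on UNIV D2g) \<and>
     (\<forall>r>0. \<exists>D. (gt has_real_derivative D) (at r) \<and> D < 0)"

definition cap_field :: "('a::euclidean_space \<Rightarrow> real) \<Rightarrow> ('a \<Rightarrow> real) \<Rightarrow> 'a \<Rightarrow> real" where
  "cap_field g \<psi> x = (\<integral>y. \<psi> y * g (x - y) \<partial>lebesgue)"

definition cap_process :: "('a::euclidean_space \<Rightarrow> real) \<Rightarrow> (nat \<Rightarrow> real \<Rightarrow> real) \<Rightarrow> (nat \<Rightarrow> 'a \<Rightarrow> real) \<Rightarrow> bool" where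
  "cap_process g \<gamma> \<psi> \<longleftrightarrow>
     \<psi> 0 \<in> borel_measurable lebesgue \<and> integrable lebesgue (\<psi> 0) \<and>
     (\<forall>x. 0 \<le> \<psi> 0 x \<and> \<psi> 0 x \<le> 1) \<and>
     (\<forall>t. mono_on {0..} (\<gamma> t) \<and> (\<forall>r\<ge>0. 0 \<le> \<gamma> t r \<and> \<gamma> t r \<le> 1)) \<and>
     (\<forall>t x. \<psi> (Suc t) x = \<gamma> t (cap_field g (\<psi> t) x)) \<and>
     (\<exists>R>0. \<forall>t x. norm x > R \<longrightarrow> \<gamma> t (cap_field g (\<psi> t) x) = 0)"

end

theory Submission
  imports Defs
begin

lemma hr_invol: assumes "norm u = 1" shows "hreflect u a (hreflect u a x) = x"
proof -
  have uu: "u \<bullet> u = 1" using assms by (simp add: norm_eq_1)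
  show ?thesis unfolding hreflect_def
    by (simp add: algebra_simps inner_diff_left uu)
qed

lemma hr_diff: "hreflect u a x - hreflect u a y = (x - y) - (2 * ((x - y) \<bullet> u)) *\<^sub>R u"
  unfolding hreflect_def by (simp add: algebra_simps inner_diff_left)

lemma hr_dist: assumes "norm u = 1" shows "norm (hreflect u a x - hreflect u a y) = norm (x - y)"
proof -
  have uu: "u \<bullet> u = 1" using assms by (simp add: norm_eq_1)
  have "(norm (hreflect u a x - hreflect u a y))\<^sup>2 = (norm (x - y))\<^sup>2"
    unfolding hr_diff power2_norm_eq_inner
    by (simp add: inner_diff_left inner_diff_right uu inner_commute algebra_simps power2_eq_square)
  then show ?thesis by (simp add: power2_eq_iff_nonneg)
qed

lemma hr_cont: "continuous_on UNIV (hreflect u a)"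
  unfolding hreflect_def by (intro continuous_intros)

lemma hr_ball: assumes "norm u = 1" shows "hreflect u a ` ball c r = ball (hreflect u a c) r"
proof
  show "hreflect u a ` ball c r \<subseteq> ball (hreflect u a c) r"
    using hr_dist[OF assms] by (auto simp: dist_norm)
  show "ball (hreflect u a c) r \<subseteq> hreflect u a ` ball c r"
  proof
    fix y assume "y \<in> ball (hreflect u a c) r"
    then have "hreflect u a y \<in> ball c r"
      using hr_dist[OF assms, where a=a and x=c and y="hreflect u a y"] hr_invol[OF assms, of a y]
      by (auto simp: dist_norm)
    then show "y \<in> hreflect u a ` ball c r" using hr_invol[OF assms] by (metis image_eqI)
  qed
qed

lemma hr_vimage: assumes "norm u = 1" shows "hreflect u a -` S = hreflect u a ` S"
  using hr_invol[OF assms] by (auto simp: image_iff) (metis)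

lemma emeasure_hr_open:
  fixes S :: "'a::euclidean_space set"
  assumes u: "norm u = 1" and S: "open S"
  shows "emeasure lebesgue (hreflect u a ` S) = emeasure lebesgue S"
proof -
  let ?\<rho> = "hreflect u a"
  define K where "K = {(c, r). 0 < r \<and> ball c r \<subseteq> S}"
  have cov: "\<exists>i. i \<in> K \<and> x \<in> ball (fst i) (snd i) \<and> snd i < d" if "x \<in> S" "0 < d" for x d
  proof -
    obtain e where e: "e > 0" "ball x e \<subseteq> S" using S \<open>x \<in> S\<close> open_contains_ball by blast
    show ?thesis
      by (rule exI[of _ "(x, min e d / 2)"]) (use e that in \<open>auto simp: K_def\<close>)
  qed
  obtain C where C: "countable C" "C \<subseteq> K"
     "pairwise (\<lambda>i j. disjnt (ball (fst i) (snd i)) (ball (fst j) (snd j))) C"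
     "negligible (S - (\<Union>i \<in> C. ball (fst i) (snd i)))"
    using Vitali_covering_theorem_balls[of S K fst snd] cov by blast
  define B where "B (i::'a \<times> real) = ball (fst i) (snd i)" for i
  define B' where "B' (i::'a \<times> real) = ball (?\<rho> (fst i)) (snd i)" for i
  define U where "U = (\<Union>i \<in> C. B i)"
  have US: "U \<subseteq> S" using C(2) unfolding U_def B_def K_def by fastforce
  have N: "S - U \<in> null_sets lebesgue" using C(4) by (simp add: U_def B_def negligible_iff_null_sets)
  have disjB: "disjoint_family_on B C"
    using C(3) unfolding disjoint_family_on_def pairwise_def disjnt_def B_def by blast
  have disjB': "disjoint_family_on B' C"
  proof -
    have "B' i = ?\<rho> ` B i" for i using hr_ball[OF u] by (simp add: B_def B'_def)
    moreover have "inj ?\<rho>" using hr_invol[OF u] by (metis injI)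
    ultimately show ?thesis using disjB unfolding disjoint_family_on_def
      by (metis image_Int image_empty)
  qed
  have "emeasure lebesgue S = emeasure lebesgue (U \<union> (S - U))"
    using US by (metis Un_Diff_cancel sup.absorb2)
  also have "\<dots> = emeasure lebesgue U"
    by (rule emeasure_Un_null_set[OF _ N]) (auto simp: U_def B_def intro!: sets_completionI_sets borel_open open_UN)
  also have "\<dots> = (\<integral>\<^sup>+i. emeasure lebesgue (B i) \<partial>count_space C)"
    unfolding U_def by (rule emeasure_UN_countable) (auto simp: B_def C(1) disjB)
  finally have eq1: "emeasure lebesgue S = (\<integral>\<^sup>+i. emeasure lebesgue (B i) \<partial>count_space C)" .
  have imU: "?\<rho> ` U = (\<Union>i \<in> C. B' i)" by (simp add: U_def image_UN B_def B'_def hr_ball[OF u])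
  have N': "?\<rho> ` (S - U) \<in> null_sets lebesgue"
  proof -
    have "negligible (?\<rho> ` (S - U))"
    proof (rule negligible_locally_Lipschitz_image)
      show "negligible (S - U)" using N by (simp add: negligible_iff_null_sets)
      show "\<exists>T B. open T \<and> x \<in> T \<and> (\<forall>y \<in> (S - U) \<inter> T. norm (?\<rho> y - ?\<rho> x) \<le> B * norm (y - x))" for x
        by (rule exI[of _ UNIV], rule exI[of _ 1]) (simp add: hr_dist[OF u])
    qed simp
    then show ?thesis by (simp add: negligible_iff_null_sets)
  qed
  have "emeasure lebesgue (?\<rho> ` S) = emeasure lebesgue (?\<rho> ` U \<union> ?\<rho> ` (S - U))"
    using US by (metis Un_Diff_cancel sup.absorb2 image_Un)
  also have "\<dots> = emeasure lebesgue (?\<rho> ` U)"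
    by (rule emeasure_Un_null_set[OF _ N']) (auto simp: imU B'_def intro!: sets_completionI_sets borel_open open_UN)
  also have "\<dots> = (\<integral>\<^sup>+i. emeasure lebesgue (B' i) \<partial>count_space C)"
    unfolding imU by (rule emeasure_UN_countable) (auto simp: B'_def C(1) disjB')
  also have "\<dots> = (\<integral>\<^sup>+i. emeasure lebesgue (B i) \<partial>count_space C)"
  proof (rule nn_integral_cong)
    fix i
    show "emeasure lebesgue (B' i) = emeasure lebesgue (B i)"
    proof (cases "snd i \<ge> 0")
      case True then show ?thesis
        unfolding B_def B'_def by (simp only: emeasure_lebesgue_ball_conv_unit_ball[OF True])
    next
      case False then have e: "ball (fst i) (snd i) = {}" "ball (?\<rho> (fst i)) (snd i) = {}" by auto
      show ?thesis unfolding B_def B'_def by (simp only: e)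
    qed
  qed
  finally show ?thesis using eq1 by simp
qed

lemma lborel_hr: assumes u: "norm u = 1"
  shows "distr lborel lborel (hreflect u a) = (lborel :: 'a::euclidean_space measure)"
proof (rule lborel_eqI[symmetric])
  have meas: "hreflect u a \<in> borel_measurable borel"
    using hr_cont by (rule borel_measurable_continuous_onI)
  show "sets (distr lborel lborel (hreflect u a)) = sets borel" by simp
  fix l x :: 'a
  assume "\<And>b. b \<in> Basis \<Longrightarrow> l \<bullet> b \<le> x \<bullet> b"
  then have box: "emeasure lborel (box l x) = (\<Prod>b\<in>Basis. (x - l) \<bullet> b)"
    by (simp add: emeasure_lborel_box_eq inner_diff_left)
  have "emeasure (distr lborel lborel (hreflect u a)) (box l x) = emeasure lborel (hreflect u a -` box l x)"
    using meas by (subst emeasure_distr) auto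
  also have "\<dots> = emeasure lebesgue (hreflect u a ` box l x)"
  proof -
    have "hreflect u a -` box l x \<in> sets lborel"
      using measurable_sets_borel[OF meas, of "box l x"] by simp
    then show ?thesis using hr_vimage[OF u, of a "box l x"] by simp
  qed
  also have "\<dots> = emeasure lebesgue (box l x)" by (rule emeasure_hr_open[OF u]) (rule open_box)
  also have "\<dots> = emeasure lborel (box l x)" by simp
  finally show "emeasure (distr lborel lborel (hreflect u a)) (box l x) = (\<Prod>b\<in>Basis. (x - l) \<bullet> b)"
    using box by simp
qed


lemma integral_hr:
  fixes h :: "'a::euclidean_space \<Rightarrow> real"
  assumes u: "norm u = 1" and hm: "h \<in> borel_measurable borel"
  shows "(\<integral>z. h (hreflect u a z) \<partial>lborel) = (\<integral>z. h z \<partial>lborel)"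
    and "integrable lborel (\<lambda>z. h (hreflect u a z)) \<longleftrightarrow> integrable lborel h"
proof -
  have meas: "hreflect u a \<in> measurable lborel lborel"
    using borel_measurable_continuous_onI[OF hr_cont] by simp
  have hm': "h \<in> borel_measurable lborel" using hm by simp
  show "(\<integral>z. h (hreflect u a z) \<partial>lborel) = (\<integral>z. h z \<partial>lborel)"
    using integral_distr[OF meas hm'] lborel_hr[OF u] by simp
  show "integrable lborel (\<lambda>z. h (hreflect u a z)) \<longleftrightarrow> integrable lborel h"
    using integrable_distr_eq[OF meas hm'] lborel_hr[OF u] by simp
qed

lemma hr_normsq: assumes u: "norm u = 1"
  shows "(norm (x - hreflect u a z))\<^sup>2 = (norm (x - z))\<^sup>2 + 4 * (z \<bullet> u - a) * (x \<bullet> u - a)"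
proof -
  have uu: "u \<bullet> u = 1" using u by (simp add: norm_eq_1)
  have e: "x - hreflect u a z = (x - z) + (2 * (z \<bullet> u - a)) *\<^sub>R u" unfolding hreflect_def by simp
  show ?thesis unfolding e power2_norm_eq_inner
    by (simp add: inner_add_left inner_add_right inner_diff_left inner_diff_right uu inner_commute algebra_simps)
qed

lemma hr_inner: assumes u: "norm u = 1" shows "hreflect u a z \<bullet> u - a = - (z \<bullet> u - a)"
proof -
  have uu: "u \<bullet> u = 1" using u by (simp add: norm_eq_1)
  show ?thesis unfolding hreflect_def by (simp add: inner_diff_left uu algebra_simps)
qed

lemma field_refl_le:
  fixes g h :: "'a::euclidean_space \<Rightarrow> real"
  assumes u: "norm u = 1"
    and grad: "\<And>v w. norm v = norm w \<Longrightarrow> g v = g w"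
    and gmono: "\<And>v w. norm v \<le> norm w \<Longrightarrow> g w \<le> g v"
    and gm: "g \<in> borel_measurable borel" and gb: "\<And>x. 0 \<le> g x \<and> g x \<le> 1"
    and hm: "h \<in> borel_measurable borel" and hi: "integrable lborel h"
    and hsym: "\<forall>x\<in>hminus u a. h x \<le> h (hreflect u a x)"
    and x: "x \<in> hminus u a"
  shows "cap_field g h x \<le> cap_field g h (hreflect u a x)"
proof -
  let ?r = "hreflect u a"
  have rm: "?r \<in> borel_measurable borel" by (rule borel_measurable_continuous_onI[OF hr_cont])
  have hrm: "(\<lambda>z. h (?r z)) \<in> borel_measurable borel" using measurable_compose[OF rm hm] by (simp add: o_def)
  have hri: "integrable lborel (\<lambda>z. h (?r z))" using integral_hr(2)[OF u hm] hi by simp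
  have gxm: "(\<lambda>z. g (y - z)) \<in> borel_measurable borel" for y
    using measurable_compose[OF _ gm, of "\<lambda>z. y - z"] by simp
  have gxm': "(\<lambda>z. g (y - ?r z)) \<in> borel_measurable borel" for y
    using measurable_compose[OF rm gxm] by (simp add: o_def)
  have intb: "integrable lborel (\<lambda>z. k z * G z)" if "integrable lborel k" "k \<in> borel_measurable borel"
     "G \<in> borel_measurable borel" "\<And>z. 0 \<le> G z \<and> G z \<le> 1" for k G :: "'a \<Rightarrow> real"
  proof (rule Bochner_Integration.integrable_bound[OF that(1)])
    show "(\<lambda>z. k z * G z) \<in> borel_measurable lborel" using that(2,3) by simp
    show "AE z in lborel. norm (k z * G z) \<le> norm (k z)"
      using that(4) by (auto simp: abs_mult intro!: mult_left_le)
  qed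
  have I1: "integrable lborel (\<lambda>z. h z * g (x - z))" by (rule intb[OF hi hm gxm gb])
  have I2: "integrable lborel (\<lambda>z. h (?r z) * g (x - z))" by (rule intb[OF hri hrm gxm gb])
  have I3: "integrable lborel (\<lambda>z. h z * g (x - ?r z))" by (rule intb[OF hi hm gxm' gb])
  have I4: "integrable lborel (\<lambda>z. h (?r z) * g (x - ?r z))" by (rule intb[OF hri hrm gxm' gb])
  have cf: "cap_field g h y = (\<integral>z. h z * g (y - z) \<partial>lborel)" for y
    unfolding cap_field_def using hm gxm by (intro integral_completion) simp
  have A: "cap_field g h (?r x) = (\<integral>z. h (?r z) * g (x - z) \<partial>lborel)"
  proof -
    have mm: "(\<lambda>z. h z * g (?r x - z)) \<in> borel_measurable borel" using hm gxm by simp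
    have "cap_field g h (?r x) = (\<integral>z. h (?r z) * g (?r x - ?r z) \<partial>lborel)"
      unfolding cf using integral_hr(1)[where a=a, OF u mm] by simp
    also have "\<dots> = (\<integral>z. h (?r z) * g (x - z) \<partial>lborel)"
      using grad[OF hr_dist[OF u]] by simp
    finally show ?thesis .
  qed
  have B: "cap_field g h (?r x) = (\<integral>z. h z * g (x - ?r z) \<partial>lborel)"
  proof -
    have mm: "(\<lambda>z. h (?r z) * g (x - z)) \<in> borel_measurable borel" using hrm gxm by simp
    show ?thesis unfolding A using integral_hr(1)[where a=a, OF u mm] hr_invol[OF u, of a] by simp
  qed
  have C: "cap_field g h x = (\<integral>z. h (?r z) * g (x - ?r z) \<partial>lborel)"
  proof -
    have mm: "(\<lambda>z. h z * g (x - z)) \<in> borel_measurable borel" using hm gxm by simp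
    show ?thesis unfolding cf using integral_hr(1)[where a=a, OF u mm] by simp
  qed
  define P where "P z = (h (?r z) - h z) * (g (x - z) - g (x - ?r z))" for z
  have Pnn: "0 \<le> P z" for z
  proof -
    have xs: "x \<bullet> u - a < 0" using x by (simp add: hminus_def)
    have nq: "(norm (x - ?r z))\<^sup>2 = (norm (x - z))\<^sup>2 + 4 * (z \<bullet> u - a) * (x \<bullet> u - a)"
      by (rule hr_normsq[OF u])
    consider "z \<bullet> u - a < 0" | "z \<bullet> u - a = 0" | "z \<bullet> u - a > 0" by linarith
    then show ?thesis
    proof cases
      case 1
      have "h z \<le> h (?r z)" using hsym 1 by (simp add: hminus_def)
      moreover have "4 * (z \<bullet> u - a) * (x \<bullet> u - a) \<ge> 0" using 1 xs
        by (simp add: mult_nonpos_nonpos)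
      then have "(norm (x - z))\<^sup>2 \<le> (norm (x - ?r z))\<^sup>2" using nq by linarith
      then have "norm (x - z) \<le> norm (x - ?r z)" by (rule power2_le_imp_le) simp
      then have "g (x - ?r z) \<le> g (x - z)" by (rule gmono)
      ultimately show ?thesis unfolding P_def by simp
    next
      case 2
      then have "?r z = z" unfolding hreflect_def by simp
      then show ?thesis unfolding P_def by simp
    next
      case 3
      have "?r z \<in> hminus u a" using 3 hr_inner[OF u, of a z] by (simp add: hminus_def)
      then have "h (?r z) \<le> h z" using hsym hr_invol[OF u] by metis
      moreover have "4 * (z \<bullet> u - a) * (x \<bullet> u - a) \<le> 0" using 3 xs
        by (simp add: mult_nonneg_nonpos)
      then have "(norm (x - ?r z))\<^sup>2 \<le> (norm (x - z))\<^sup>2" using nq by linarith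
      then have "norm (x - ?r z) \<le> norm (x - z)" by (rule power2_le_imp_le) simp
      then have "g (x - z) \<le> g (x - ?r z)" by (rule gmono)
      ultimately show ?thesis unfolding P_def by (simp add: mult_nonpos_nonpos)
    qed
  qed
  have "(\<integral>z. P z \<partial>lborel) = (\<integral>z. (h (?r z) * g (x - z) + h z * g (x - ?r z))
        - (h z * g (x - z) + h (?r z) * g (x - ?r z)) \<partial>lborel)"
    unfolding P_def by (rule Bochner_Integration.integral_cong) (simp_all add: algebra_simps)
  also have "\<dots> = 2 * (cap_field g h (?r x) - cap_field g h x)"
    using I1 I2 I3 I4 A B C cf[of x] by simp
  finally have "0 \<le> 2 * (cap_field g h (?r x) - cap_field g h x)"
    using Bochner_Integration.integral_nonneg[of lborel P] Pnn by simp
  then show ?thesis by simp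
qed


lemma field_cont:
  fixes g \<psi> :: "'a::euclidean_space \<Rightarrow> real"
  assumes lip: "L-lipschitz_on UNIV g" and gb: "\<And>x. 0 \<le> g x \<and> g x \<le> 1"
    and pm: "\<psi> \<in> borel_measurable lebesgue" and pi: "integrable lebesgue \<psi>"
  shows "continuous_on UNIV (cap_field g \<psi>)"
proof -
  have gc: "continuous_on UNIV g" by (rule lipschitz_on_continuous_on[OF lip])
  have gm: "g \<in> borel_measurable borel" by (rule borel_measurable_continuous_onI[OF gc])
  have gxb: "(\<lambda>z. g (y - z)) \<in> borel_measurable borel" for y
    using measurable_compose[OF _ gm, of "\<lambda>z. y - z"] by simp
  have gxm: "(\<lambda>z. g (y - z)) \<in> borel_measurable lebesgue" for y
    using gxb[of y] by (intro measurable_completion) simp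
  have I: "integrable lebesgue (\<lambda>z. \<psi> z * g (y - z))" for y
  proof (rule Bochner_Integration.integrable_bound[OF pi])
    show "(\<lambda>z. \<psi> z * g (y - z)) \<in> borel_measurable lebesgue" using pm gxm by simp
    show "AE z in lebesgue. norm (\<psi> z * g (y - z)) \<le> norm (\<psi> z)"
      using gb by (auto simp: abs_mult intro!: mult_left_le)
  qed
  have L0: "0 \<le> L" using lip by (rule lipschitz_on_nonneg)
  have "(L * (\<integral>z. \<bar>\<psi> z\<bar> \<partial>lebesgue))-lipschitz_on UNIV (cap_field g \<psi>)"
  proof (rule lipschitz_onI)
    show "0 \<le> L * (\<integral>z. \<bar>\<psi> z\<bar> \<partial>lebesgue)" using L0 by simp
    fix x y :: 'a
    have "dist (cap_field g \<psi> x) (cap_field g \<psi> y) = norm (\<integral>z. \<psi> z * (g (x - z) - g (y - z)) \<partial>lebesgue)"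
      unfolding cap_field_def dist_norm
      using I[of x] I[of y] by (simp add: right_diff_distrib)
    also have "\<dots> \<le> (\<integral>z. \<bar>\<psi> z\<bar> * (L * dist x y) \<partial>lebesgue)"
    proof (rule Bochner_Integration.integral_norm_bound_integral)
      show "integrable lebesgue (\<lambda>z. \<psi> z * (g (x - z) - g (y - z)))"
        using I[of x] I[of y] by (simp add: right_diff_distrib)
      show "integrable lebesgue (\<lambda>z. \<bar>\<psi> z\<bar> * (L * dist x y))"
        using pi by simp
      fix z
      have "\<bar>g (x - z) - g (y - z)\<bar> \<le> L * dist (x - z) (y - z)"
        using lipschitz_onD[OF lip, of "x - z" "y - z"] by (simp add: dist_real_def)
      also have "dist (x - z) (y - z) = dist x y" by (simp add: dist_norm)
      finally have "\<bar>g (x - z) - g (y - z)\<bar> \<le> L * dist x y" .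
      then show "norm (\<psi> z * (g (x - z) - g (y - z))) \<le> \<bar>\<psi> z\<bar> * (L * dist x y)"
        by (simp add: abs_mult mult_left_mono)
    qed
    also have "\<dots> = L * (\<integral>z. \<bar>\<psi> z\<bar> \<partial>lebesgue) * dist x y"
      using pi by simp
    finally show "dist (cap_field g \<psi> x) (cap_field g \<psi> y) \<le> L * (\<integral>z. \<bar>\<psi> z\<bar> \<partial>lebesgue) * dist x y" .
  qed
  then show ?thesis by (rule lipschitz_on_continuous_on)
qed

theorem lemma1:
  fixes g :: "'a::euclidean_space \<Rightarrow> real" and gt :: "real \<Rightarrow> real" and L :: real
    and \<gamma> :: "nat \<Rightarrow> real \<Rightarrow> real" and \<psi> :: "nat \<Rightarrow> 'a \<Rightarrow> real"
    and u :: 'a and a :: real and t :: nat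
  assumes "cap_kernel g gt L"
    and "cap_process g \<gamma> \<psi>"
    and "norm u = 1"
    and "t \<ge> 1"
    and "\<forall>x\<in>hminus u a. \<psi> t x \<le> \<psi> t (hreflect u a x)"
  shows "\<forall>s\<ge>t. \<forall>x\<in>hminus u a. \<psi> s x \<le> \<psi> s (hreflect u a x)"
proof -
  note u = assms(3)
  have gb: "\<And>x. 0 \<le> g x \<and> g x \<le> 1" and grad: "\<And>x. g x = gt (norm x)" and g0: "g 0 = 1"
    and lip: "L-lipschitz_on UNIV g"
    and der: "\<And>r. r > 0 \<Longrightarrow> \<exists>D. (gt has_real_derivative D) (at r) \<and> D < 0"
    using assms(1) unfolding cap_kernel_def by blast+
  have p0m: "\<psi> 0 \<in> borel_measurable lebesgue" and p0i: "integrable lebesgue (\<psi> 0)"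
    and p0b: "\<And>x. 0 \<le> \<psi> 0 x \<and> \<psi> 0 x \<le> 1"
    and gmon: "\<And>s. mono_on {0..} (\<gamma> s)" and grange: "\<And>s r. r \<ge> 0 \<Longrightarrow> 0 \<le> \<gamma> s r \<and> \<gamma> s r \<le> 1"
    and step: "\<And>s x. \<psi> (Suc s) x = \<gamma> s (cap_field g (\<psi> s) x)"
    using assms(2) unfolding cap_process_def by blast+
  obtain R where R: "R > 0" "\<And>s x. norm x > R \<Longrightarrow> \<gamma> s (cap_field g (\<psi> s) x) = 0"
    using assms(2) unfolding cap_process_def by blast
  have gradeq: "g v = g w" if "norm v = norm w" for v w using grad that by metis
  have gmono: "g w \<le> g v" if "norm v \<le> norm w" for v w
  proof (cases "norm v = 0")
    case True then have "v = 0" by simp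
    then show ?thesis using g0 gb[of w] by simp
  next
    case False
    then have nv: "norm v > 0" by simp
    have "gt (norm w) \<le> gt (norm v)"
    proof (rule DERIV_nonpos_imp_nonincreasing[OF that])
      fix r assume r: "norm v \<le> r" "r \<le> norm w"
      then have "r > 0" using nv by linarith
      then obtain D where "(gt has_real_derivative D) (at r)" "D < 0" using der by blast
      then show "\<exists>y. (gt has_real_derivative y) (at r) \<and> y \<le> 0" by (intro exI[of _ D]) simp
    qed
    then show ?thesis using grad[of v] grad[of w] by simp
  qed
  have gc: "continuous_on UNIV g" by (rule lipschitz_on_continuous_on[OF lip])
  have gm: "g \<in> borel_measurable borel" by (rule borel_measurable_continuous_onI[OF gc])
  define P where "P s \<longleftrightarrow> \<psi> s \<in> borel_measurable lebesgue \<and> integrable lebesgue (\<psi> s) \<and>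
      (\<forall>x. 0 \<le> \<psi> s x \<and> \<psi> s x \<le> 1)" for s
  have fnn: "0 \<le> cap_field g (\<psi> s) x" if "P s" for s x
    using that gb unfolding P_def cap_field_def by (intro Bochner_Integration.integral_nonneg) simp
  have sucb: "\<psi> (Suc s) \<in> borel_measurable borel" if "P s" for s
  proof -
    define G where "G r = \<gamma> s (max 0 r)" for r
    have "mono G" unfolding G_def mono_def
      using mono_onD[OF gmon[of s]] by (simp add: max_def)
    then have Gm: "G \<in> borel_measurable borel" by (rule borel_measurable_mono)
    have fc: "cap_field g (\<psi> s) \<in> borel_measurable borel"
      using that unfolding P_def by (intro borel_measurable_continuous_onI field_cont[OF lip gb]) auto
    have "\<psi> (Suc s) = (\<lambda>x. G (cap_field g (\<psi> s) x))"
      using fnn[OF that] step by (auto simp: G_def max_def)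
    then show ?thesis using measurable_compose[OF fc Gm] by (simp add: o_def)
  qed
  have sucP: "P (Suc s)" if "P s" for s
  proof -
    have bnd: "0 \<le> \<psi> (Suc s) x \<and> \<psi> (Suc s) x \<le> 1" for x
      using step grange fnn[OF that] by simp
    have m: "\<psi> (Suc s) \<in> borel_measurable lebesgue"
      using sucb[OF that] by (intro measurable_completion) simp
    have "integrable lebesgue (\<psi> (Suc s))"
    proof (rule Bochner_Integration.integrable_bound)
      show "integrable lebesgue (indicator (cball (0::'a) R) :: 'a \<Rightarrow> real)"
        using emeasure_lborel_cball_finite[of "0::'a" R] by (intro integrable_real_indicator) auto
      show "\<psi> (Suc s) \<in> borel_measurable lebesgue" by (rule m)
      show "AE x in lebesgue. norm (\<psi> (Suc s) x) \<le> norm (indicator (cball (0::'a) R) x :: real)"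
      proof (rule AE_I2)
        fix x :: 'a
        show "norm (\<psi> (Suc s) x) \<le> norm (indicator (cball (0::'a) R) x :: real)"
        proof (cases "norm x > R")
          case True then show ?thesis using R(2) step by simp
        next
          case False then show ?thesis using bnd[of x] by (simp add: indicator_def)
        qed
      qed
    qed
    then show ?thesis using m bnd unfolding P_def by blast
  qed
  have allP: "P s" for s
  proof (induction s)
    case 0 then show ?case using p0m p0i p0b unfolding P_def by blast
  next
    case (Suc s) then show ?case by (rule sucP)
  qed
  show ?thesis
  proof (intro allI impI)
    fix s assume "t \<le> s"
    then show "\<forall>x\<in>hminus u a. \<psi> s x \<le> \<psi> s (hreflect u a x)"
    proof (induction s rule: nat_induct_at_least)
      case base then show ?case using assms(5) by blast
    next
      case (Suc s)
      have "s \<noteq> 0" using Suc.hyps assms(4) by linarith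
      then obtain k where k: "s = Suc k" using not0_implies_Suc by blast
      have hm: "\<psi> s \<in> borel_measurable borel" using sucb[OF allP[of k]] k by simp
      have hi: "integrable lborel (\<psi> s)"
        using allP[of s] hm integrable_completion[of "\<psi> s" lborel] unfolding P_def by simp
      show ?case
      proof
        fix x assume x: "x \<in> hminus u a"
        have le: "cap_field g (\<psi> s) x \<le> cap_field g (\<psi> s) (hreflect u a x)"
          by (rule field_refl_le[OF u gradeq gmono gm gb hm hi Suc.IH x])
        show "\<psi> (Suc s) x \<le> \<psi> (Suc s) (hreflect u a x)"
          unfolding step using le fnn[OF allP[of s]] by (intro mono_onD[OF gmon]) auto
      qed
    qed
  qed
qed

end
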